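(* Let $\mu>0$ and $b>0$. Let $Z_1,Z_2,\dots$ be independent Normal random variables with mean $\mu$ and variance $1$, let $S_m=\sum_{i=1}^m Z_i$, and let $\tau=\min\{m: S_m<-b \text{ or } S_m>b\}$. Let $\Phi$ be the standard Normal distribution function and $R(a)=\frac{\Phi(a)}{1-\Phi(a)}$. Then $$\frac{e^{2\mu b}-1}{e^{2\mu b}-R(-\mu)e^{-2\mu b}}<\mathbb{P}(S_\tau>b)<\frac{e^{2\mu b}R(\mu)-1}{e^{2\mu b}R(\mu)-e^{-2\mu b}}.$$ *)

theory Defs
  imports "HOL-Probability.Probability"
begin

definition std_normal_cdf :: "real \<Rightarrow> real" where
  "std_normal_cdf a = cdf (density lborel std_normal_density) a"

definition R_ratio :: "real \<Rightarrow> real" where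
  "R_ratio a = std_normal_cdf a / (1 - std_normal_cdf a)"

text \<open>Partial sums S_m = Z_1 + ... + Z_m; here Z_i is represented as Z (i-1),
  i.e. the sequence Z is indexed from 0, and S m = sum of the first m terms.\<close>
definition partial_sum :: "(nat \<Rightarrow> 'a \<Rightarrow> real) \<Rightarrow> nat \<Rightarrow> 'a \<Rightarrow> real" where
  "partial_sum Z m \<omega> = (\<Sum>i<m. Z i \<omega>)"

text \<open>Exit time tau = min {m >= 1. S_m < -b or S_m > b} (meaningful when the set is nonempty).\<close>
definition exit_time :: "(nat \<Rightarrow> 'a \<Rightarrow> real) \<Rightarrow> real \<Rightarrow> 'a \<Rightarrow> nat" where
  "exit_time Z b \<omega> = (LEAST m. m \<ge> 1 \<and> (partial_sum Z m \<omega> < -b \<or> partial_sum Z m \<omega> > b))"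

definition upper_exit_event :: "'a measure \<Rightarrow> (nat \<Rightarrow> 'a \<Rightarrow> real) \<Rightarrow> real \<Rightarrow> 'a set" where
  "upper_exit_event M Z b = {\<omega> \<in> space M.
      (\<exists>m\<ge>1. partial_sum Z m \<omega> < -b \<or> partial_sum Z m \<omega> > b) \<and>
      partial_sum Z (exit_time Z b \<omega>) \<omega> > b}"

end

theory Submission
  imports Defs "HOL-Probability.Probability"
begin


lemma ennreal_prod_integral:
  fixes f g :: "real \<Rightarrow> ennreal"
  assumes [measurable]: "f \<in> borel_measurable lborel" "g \<in> borel_measurable lborel"
  shows "(\<integral>\<^sup>+s. f s \<partial>lborel) * (\<integral>\<^sup>+t. g t \<partial>lborel) = (\<integral>\<^sup>+s. \<integral>\<^sup>+t. f s * g t \<partial>lborel \<partial>lborel)"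
proof -
  have "(\<integral>\<^sup>+s. f s \<partial>lborel) * (\<integral>\<^sup>+t. g t \<partial>lborel) = (\<integral>\<^sup>+s. f s * (\<integral>\<^sup>+t. g t \<partial>lborel) \<partial>lborel)"
    by (simp add: nn_integral_multc)
  also have "\<dots> = (\<integral>\<^sup>+s. \<integral>\<^sup>+t. f s * g t \<partial>lborel \<partial>lborel)"
    by (simp add: nn_integral_cmult)
  finally show ?thesis .
qed

lemma cheb_laplace:
  fixes w :: "real \<Rightarrow> real" and c a :: real
  assumes [measurable]: "w \<in> borel_measurable borel" and w0: "\<And>t. w t \<ge> 0"
    and c: "c \<ge> 0" and a: "a \<ge> 0"
  defines "L \<equiv> \<lambda>x. \<integral>\<^sup>+t. ennreal (w t * exp (- x * t)) \<partial>lborel"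
  shows "L c * L a + L a * L c \<le> L 0 * L (c + a) + L (c + a) * L 0"
proof -
  define u where "u = (\<lambda>x t. ennreal (w t * exp (- x * t)))"
  have [measurable]: "u x \<in> borel_measurable lborel" for x unfolding u_def by measurable
  have [measurable]: "(\<lambda>(s,t). u x s * u y t) \<in> borel_measurable (lborel \<Otimes>\<^sub>M lborel)" for x y
    unfolding u_def by measurable
  have Lu: "L x = (\<integral>\<^sup>+t. u x t \<partial>lborel)" for x unfolding L_def u_def by simp
  have P: "L x * L y = (\<integral>\<^sup>+s. \<integral>\<^sup>+t. u x s * u y t \<partial>lborel \<partial>lborel)" for x y
    unfolding Lu by (rule ennreal_prod_integral) measurable
  have m: "(\<lambda>s. \<integral>\<^sup>+t. u x s * u y t \<partial>lborel) \<in> borel_measurable lborel" for x y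
    by measurable
  have "L c * L a + L a * L c = (\<integral>\<^sup>+s. (\<integral>\<^sup>+t. u c s * u a t \<partial>lborel) + (\<integral>\<^sup>+t. u a s * u c t \<partial>lborel) \<partial>lborel)"
    unfolding P by (rule nn_integral_add[symmetric]) (use m in auto)
  also have "\<dots> = (\<integral>\<^sup>+s. \<integral>\<^sup>+t. u c s * u a t + u a s * u c t \<partial>lborel \<partial>lborel)"
    by (intro nn_integral_cong nn_integral_add[symmetric]) (simp_all add: u_def)
  also have "\<dots> \<le> (\<integral>\<^sup>+s. \<integral>\<^sup>+t. u 0 s * u (c+a) t + u (c+a) s * u 0 t \<partial>lborel \<partial>lborel)"
  proof (intro nn_integral_mono)
    fix s t :: real
    have key: "exp (- c * s) * exp (- a * t) + exp (- a * s) * exp (- c * t)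
        \<le> exp (- (c+a) * t) + exp (- (c+a) * s)"
    proof -
      have "(exp (- c * s) - exp (- c * t)) * (exp (- a * s) - exp (- a * t)) \<ge> 0"
      proof (cases "s \<le> t")
        case True
        have "exp (- c * t) \<le> exp (- c * s)" using c True by (simp add: mult_left_mono)
        moreover have "exp (- a * t) \<le> exp (- a * s)" using a True by (simp add: mult_left_mono)
        ultimately show ?thesis by simp
      next
        case False
        have "exp (- c * s) \<le> exp (- c * t)" using c False by (simp add: mult_left_mono)
        moreover have "exp (- a * s) \<le> exp (- a * t)" using a False by (simp add: mult_left_mono)
        ultimately show ?thesis by (simp add: mult_nonpos_nonpos)
      qed
      then show ?thesis by (simp add: algebra_simps flip: exp_add)
    qed
    have "u c s * u a t + u a s * u c t = ennreal (w s * w t * (exp (- c * s) * exp (- a * t) + exp (- a * s) * exp (- c * t)))"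
      unfolding u_def using w0 by (simp add: ennreal_mult'[symmetric] flip: ennreal_plus) (simp add: algebra_simps)
    also have "\<dots> \<le> ennreal (w s * w t * (exp (- (c+a) * t) + exp (- (c+a) * s)))"
      using key w0 by (intro ennreal_leI mult_left_mono) auto
    also have "\<dots> = u 0 s * u (c+a) t + u (c+a) s * u 0 t"
      unfolding u_def using w0 by (simp add: ennreal_mult'[symmetric] flip: ennreal_plus) (simp add: algebra_simps)
    finally show "u c s * u a t + u a s * u c t \<le> u 0 s * u (c+a) t + u (c+a) s * u 0 t" .
  qed
  also have "\<dots> = (\<integral>\<^sup>+s. (\<integral>\<^sup>+t. u 0 s * u (c+a) t \<partial>lborel) + (\<integral>\<^sup>+t. u (c+a) s * u 0 t \<partial>lborel) \<partial>lborel)"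
    by (intro nn_integral_cong nn_integral_add) (simp_all add: u_def)
  also have "\<dots> = L 0 * L (c + a) + L (c + a) * L 0"
    unfolding P by (rule nn_integral_add) (use m in auto)
  finally show ?thesis .
qed


lemma nd_int: "(\<integral>\<^sup>+z. ennreal (normal_density m 1 z) \<partial>lborel) = 1"
proof -
  interpret prob_space "density lborel (normal_density m 1)" by (simp add: prob_space_normal_density)
  show ?thesis using emeasure_space_1 by (simp add: emeasure_density)
qed

lemma nd_shift: "normal_density m 1 (c + t) = exp (c*m - c^2/2) * exp (- c * t) * normal_density m 1 t"
  unfolding normal_density_def by (simp add: power2_eq_square flip: exp_add) (simp add: field_simps; algebra)

lemma nd_refl: "normal_density m 1 (- d - t) = exp (- (d + 2*m) * d / 2) * exp (- (d + 2*m) * t) * normal_density m 1 t"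
  unfolding normal_density_def by (simp add: power2_eq_square flip: exp_add) (simp add: field_simps; algebra)

lemma nd_tilt: "exp (- (2*m) * z) * normal_density m 1 z = normal_density (-m) 1 z"
  unfolding normal_density_def by (simp add: power2_eq_square flip: exp_add) (simp add: field_simps; algebra)

lemma nd_std: "normal_density m 1 z = std_normal_density (z - m)"
  unfolding normal_density_def by simp

lemma pos_int:
  fixes g :: "real \<Rightarrow> real"
  assumes [measurable]: "g \<in> borel_measurable borel" and "k > 0" and "\<And>z. z \<in> {a<..<a+1} \<Longrightarrow> k \<le> g z"
  shows "0 < (\<integral>\<^sup>+z. ennreal (g z) \<partial>lborel)"
proof -
  have "(\<integral>\<^sup>+z. ennreal k * indicator {a<..<a+1} z \<partial>lborel) \<le> (\<integral>\<^sup>+z. ennreal (g z) \<partial>lborel)"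
    using assms(3) by (intro nn_integral_mono) (auto split: split_indicator intro: ennreal_leI)
  moreover have "(\<integral>\<^sup>+z. ennreal k * indicator {a<..<a+1} z \<partial>lborel) = ennreal k"
    by (subst nn_integral_cmult_indicator) auto
  ultimately show ?thesis using \<open>k>0\<close> by (metis ennreal_eq_0_iff leD not_gr_zero order_less_le_trans linorder_not_le)
qed

lemma nd_lower: "z \<in> {a<..<a+1} \<Longrightarrow> exp (- ((abs a + 1 + abs m)^2) / 2) / sqrt (2*pi) \<le> normal_density m 1 z"
proof -
  assume z: "z \<in> {a<..<a+1}"
  have "\<bar>z - m\<bar> \<le> abs a + 1 + abs m" using z by auto
  then have "(z - m)^2 \<le> (abs a + 1 + abs m)^2"
    by (metis abs_ge_zero power2_abs power_mono)
  then show ?thesis unfolding normal_density_def by (simp add: divide_right_mono)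
qed

lemma nd_lower_pos: "0 < exp (- ((abs a + 1 + abs m)^2) / 2) / sqrt (2*pi)"
  by simp


locale gw =
  fixes mu b :: real
  assumes mu_pos: "mu > 0" and b_pos: "b > 0"
begin

abbreviation "nd \<equiv> normal_density mu 1"

definition F :: "real \<Rightarrow> ennreal" where
  "F a = (\<integral>\<^sup>+t. ennreal (indicator {0<..} t * nd t * exp (- a * t)) \<partial>lborel)"

definition f :: "real \<Rightarrow> real" where "f a = enn2real (F a)"

definition up :: "real \<Rightarrow> ennreal" where
  "up x = (\<integral>\<^sup>+z. ennreal (indicator {b<..} (x + z) * nd z) \<partial>lborel)"
definition upM :: "real \<Rightarrow> ennreal" where
  "upM x = (\<integral>\<^sup>+z. ennreal (indicator {b<..} (x + z) * exp (- (2*mu) * (x + z)) * nd z) \<partial>lborel)"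
definition dn :: "real \<Rightarrow> ennreal" where
  "dn x = (\<integral>\<^sup>+z. ennreal (indicator {..< -b} (x + z) * nd z) \<partial>lborel)"
definition dnM :: "real \<Rightarrow> ennreal" where
  "dnM x = (\<integral>\<^sup>+z. ennreal (indicator {..< -b} (x + z) * exp (- (2*mu) * (x + z)) * nd z) \<partial>lborel)"
definition st :: "real \<Rightarrow> ennreal" where
  "st x = (\<integral>\<^sup>+z. ennreal (indicator {-b..b} (x + z) * nd z) \<partial>lborel)"
definition stM :: "real \<Rightarrow> ennreal" where
  "stM x = (\<integral>\<^sup>+z. ennreal (indicator {-b..b} (x + z) * exp (- (2*mu) * (x + z)) * nd z) \<partial>lborel)"

lemma F_le1: "a \<ge> 0 \<Longrightarrow> F a \<le> 1"
proof -
  assume a: "a \<ge> 0"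
  have "F a \<le> (\<integral>\<^sup>+z. ennreal (nd z) \<partial>lborel)"
    unfolding F_def
  proof (intro nn_integral_mono ennreal_leI)
    fix t :: real
    show "indicator {0<..} t * nd t * exp (- a * t) \<le> nd t"
    proof (cases "t > 0")
      case True
      then have "exp (- a * t) \<le> 1" using a by (simp add: mult_nonneg_nonneg)
      then show ?thesis using True by (simp add: mult_left_le)
    qed simp
  qed
  then show ?thesis by (simp add: nd_int)
qed

lemma F_fin: "a \<ge> 0 \<Longrightarrow> F a = ennreal (f a)"
  unfolding f_def using F_le1[of a] by (simp add: ennreal_enn2real_if top_unique) (metis ennreal_one_neq_top top.extremum_unique)

lemma f_nonneg: "f a \<ge> 0" unfolding f_def by simp

lemma f_pos: "a \<ge> 0 \<Longrightarrow> f a > 0"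
proof -
  assume a: "a \<ge> 0"
  define k where "k = exp (- a) * (exp (- ((abs 0 + 1 + abs mu)^2) / 2) / sqrt (2*pi))"
  have "0 < F a" unfolding F_def
  proof (rule pos_int[where k=k and a=0])
    show "0 < k" unfolding k_def by simp
    fix z :: real assume z: "z \<in> {0<..<0+1}"
    have "a * z \<le> a" using z a by (intro mult_left_le) auto
    then have "exp (- a) \<le> exp (- a * z)" by simp
    moreover have "exp (- ((abs 0 + 1 + abs mu)^2) / 2) / sqrt (2*pi) \<le> nd z"
      by (rule nd_lower[OF z])
    ultimately have "k \<le> exp (- a * z) * nd z"
      unfolding k_def by (rule mult_mono) auto
    then show "k \<le> indicator {0<..} z * nd z * exp (- a * z)"
      using z by (simp add: mult.commute)
  qed measurable
  then show ?thesis using F_fin[OF a] by (metis ennreal_less_zero_iff)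
qed

lemma ennreal_2prod: "x \<ge> 0 \<Longrightarrow> y \<ge> 0 \<Longrightarrow> ennreal x * ennreal y + ennreal y * ennreal x = ennreal (2 * (x * y))"
  by (simp add: ennreal_mult[symmetric] ennreal_plus[symmetric] mult.commute del: ennreal_plus)

lemma cheb_f: "c \<ge> 0 \<Longrightarrow> f c * f (2*mu) \<le> f 0 * f (c + 2*mu)"
proof -
  assume c: "c \<ge> 0"
  have a: "2*mu \<ge> 0" using mu_pos by simp
  have wm: "(\<lambda>t. indicator {0<..} t * nd t) \<in> borel_measurable borel" by measurable
  have Fe: "F = (\<lambda>x. \<integral>\<^sup>+t. ennreal ((indicator {0<..} t * nd t) * exp (- x * t)) \<partial>lborel)"
    unfolding F_def[abs_def] by simp
  have "F c * F (2*mu) + F (2*mu) * F c \<le> F 0 * F (c + 2*mu) + F (c + 2*mu) * F 0"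
    unfolding Fe by (rule cheb_laplace[OF wm _ c a]) simp
  moreover have "F c * F (2*mu) + F (2*mu) * F c = ennreal (2 * (f c * f (2*mu)))"
    using F_fin[OF c] F_fin[OF a] ennreal_2prod[OF f_nonneg f_nonneg] by simp
  moreover have "F 0 * F (c + 2*mu) + F (c + 2*mu) * F 0 = ennreal (2 * (f 0 * f (c + 2*mu)))"
    using F_fin[of 0] F_fin[of "c + 2*mu"] c a ennreal_2prod[OF f_nonneg f_nonneg] by simp
  ultimately have "ennreal (2 * (f c * f (2*mu))) \<le> ennreal (2 * (f 0 * f (c + 2*mu)))"
    by simp
  then show ?thesis using f_nonneg by (simp add: ennreal_le_iff)
qed

end


context gw begin

lemma up_eq: "up x = ennreal (exp ((b-x)*mu - (b-x)^2/2)) * F (b - x)"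
proof -
  define c where "c = b - x"
  define K where "K = exp (c*mu - c^2/2)"
  have "up x = (\<integral>\<^sup>+t. ennreal (indicator {b<..} (x + (c + 1 * t)) * nd (c + 1 * t)) \<partial>lborel)"
    unfolding up_def by (subst nn_integral_real_affine[where c=1 and t=c]) auto
  also have "\<dots> = (\<integral>\<^sup>+t. ennreal K * ennreal (indicator {0<..} t * nd t * exp (- c * t)) \<partial>lborel)"
  proof (intro nn_integral_cong)
    fix t :: real
    have "indicator {b<..} (x + (c + 1 * t)) * nd (c + 1 * t) = K * (indicator {0<..} t * nd t * exp (- c * t))"
      unfolding K_def nd_shift c_def by (simp split: split_indicator)
    then show "ennreal (indicator {b<..} (x + (c + 1 * t)) * nd (c + 1 * t)) = ennreal K * ennreal (indicator {0<..} t * nd t * exp (- c * t))"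
      by (simp add: ennreal_mult K_def)
  qed
  also have "\<dots> = ennreal K * F c"
    unfolding F_def by (rule nn_integral_cmult) measurable
  finally show ?thesis unfolding K_def c_def .
qed

lemma upM_eq: "upM x = ennreal (exp (- (2*mu) * b) * exp ((b-x)*mu - (b-x)^2/2)) * F (2*mu + (b - x))"
proof -
  define c where "c = b - x"
  define K where "K = exp (- (2*mu) * b) * exp (c*mu - c^2/2)"
  have "upM x = (\<integral>\<^sup>+t. ennreal (indicator {b<..} (x + (c + 1 * t)) * exp (- (2*mu) * (x + (c + 1 * t))) * nd (c + 1 * t)) \<partial>lborel)"
    unfolding upM_def by (subst nn_integral_real_affine[where c=1 and t=c]) auto
  also have "\<dots> = (\<integral>\<^sup>+t. ennreal K * ennreal (indicator {0<..} t * nd t * exp (- (2*mu + c) * t)) \<partial>lborel)"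
  proof (intro nn_integral_cong)
    fix t :: real
    have xc: "x + (c + 1 * t) = b + t" unfolding c_def by simp
    have "indicator {b<..} (x + (c + 1 * t)) * exp (- (2*mu) * (x + (c + 1 * t))) * nd (c + 1 * t) = K * (indicator {0<..} t * nd t * exp (- (2*mu + c) * t))"
      unfolding K_def nd_shift xc by (simp split: split_indicator add: algebra_simps flip: exp_add)
    then show "ennreal (indicator {b<..} (x + (c + 1 * t)) * exp (- (2*mu) * (x + (c + 1 * t))) * nd (c + 1 * t)) = ennreal K * ennreal (indicator {0<..} t * nd t * exp (- (2*mu + c) * t))"
      by (simp add: ennreal_mult K_def)
  qed
  also have "\<dots> = ennreal K * F (2*mu + c)"
    unfolding F_def by (rule nn_integral_cmult) measurable
  finally show ?thesis unfolding K_def c_def .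
qed

lemma dn_eq: "dn x = ennreal (exp (- ((x+b) + 2*mu) * (x+b) / 2)) * F ((x+b) + 2*mu)"
proof -
  define d where "d = x + b"
  define K where "K = exp (- (d + 2*mu) * d / 2)"
  have "dn x = (\<integral>\<^sup>+t. ennreal (indicator {..< -b} (x + (- d + (- 1) * t)) * nd (- d + (- 1) * t)) \<partial>lborel)"
    unfolding dn_def by (subst nn_integral_real_affine[where c="-1" and t="-d"]) auto
  also have "\<dots> = (\<integral>\<^sup>+t. ennreal K * ennreal (indicator {0<..} t * nd t * exp (- (d + 2*mu) * t)) \<partial>lborel)"
  proof (intro nn_integral_cong)
    fix t :: real
    have xc: "x + (- d + (- 1) * t) = - b - t" "- d + (- 1) * t = - d - t" unfolding d_def by simp_all
    have i: "indicator {..< -b} (x + (- d - t)) = (indicator {0<..} t :: real)" unfolding d_def by (simp split: split_indicator)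
    have e: "exp (- (2*mu) * (x + (- d - t))) = exp (2*mu*b) * exp (2*mu*t)" unfolding d_def by (simp add: algebra_simps flip: exp_add)
    have ea: "exp (2*mu*t) * exp (- (d + 2*mu) * t) = exp (- d * t)" by (simp add: algebra_simps flip: exp_add)
    have "indicator {..< -b} (x + (- d + (- 1) * t)) * nd (- d + (- 1) * t) = K * (indicator {0<..} t * nd t * exp (- (d + 2*mu) * t))"
      unfolding xc(2) unfolding K_def i nd_refl by (simp only: mult_ac)
    then show "ennreal (indicator {..< -b} (x + (- d + (- 1) * t)) * nd (- d + (- 1) * t)) = ennreal K * ennreal (indicator {0<..} t * nd t * exp (- (d + 2*mu) * t))"
      by (simp add: ennreal_mult K_def)
  qed
  also have "\<dots> = ennreal K * F (d + 2*mu)"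
    unfolding F_def by (rule nn_integral_cmult) measurable
  finally show ?thesis unfolding K_def d_def .
qed

lemma dnM_eq: "dnM x = ennreal (exp ((2*mu) * b) * exp (- ((x+b) + 2*mu) * (x+b) / 2)) * F (x+b)"
proof -
  define d where "d = x + b"
  define K where "K = exp ((2*mu) * b) * exp (- (d + 2*mu) * d / 2)"
  have "dnM x = (\<integral>\<^sup>+t. ennreal (indicator {..< -b} (x + (- d + (- 1) * t)) * exp (- (2*mu) * (x + (- d + (- 1) * t))) * nd (- d + (- 1) * t)) \<partial>lborel)"
    unfolding dnM_def by (subst nn_integral_real_affine[where c="-1" and t="-d"]) auto
  also have "\<dots> = (\<integral>\<^sup>+t. ennreal K * ennreal (indicator {0<..} t * nd t * exp (- d * t)) \<partial>lborel)"
  proof (intro nn_integral_cong)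
    fix t :: real
    have xc: "x + (- d + (- 1) * t) = - b - t" "- d + (- 1) * t = - d - t" unfolding d_def by simp_all
    have i: "indicator {..< -b} (x + (- d - t)) = (indicator {0<..} t :: real)" unfolding d_def by (simp split: split_indicator)
    have e: "exp (- (2*mu) * (x + (- d - t))) = exp (2*mu*b) * exp (2*mu*t)" unfolding d_def by (simp add: algebra_simps flip: exp_add)
    have ea: "exp (2*mu*t) * exp (- (d + 2*mu) * t) = exp (- d * t)" by (simp add: algebra_simps flip: exp_add)
    have "indicator {..< -b} (x + (- d + (- 1) * t)) * exp (- (2*mu) * (x + (- d + (- 1) * t))) * nd (- d + (- 1) * t) = K * (indicator {0<..} t * nd t * exp (- d * t))"
      unfolding xc(2) unfolding K_def i e nd_refl ea[symmetric] by (simp only: mult_ac)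
    then show "ennreal (indicator {..< -b} (x + (- d + (- 1) * t)) * exp (- (2*mu) * (x + (- d + (- 1) * t))) * nd (- d + (- 1) * t)) = ennreal K * ennreal (indicator {0<..} t * nd t * exp (- d * t))"
      by (simp add: ennreal_mult K_def)
  qed
  also have "\<dots> = ennreal K * F d"
    unfolding F_def by (rule nn_integral_cmult) measurable
  finally show ?thesis unfolding K_def d_def .
qed

end


context gw begin

lemma F_strict: assumes a: "0 \<le> a" and aa: "a < a'" shows "f a' < f a"
proof -
  define g where "g = (\<lambda>t. indicator {0<..} t * nd t * (exp (- a * t) - exp (- a' * t)))"
  have g0: "g t \<ge> 0" for t
  proof (cases "t > 0")
    case True then have "a * t \<le> a' * t" using aa by simp
    then show ?thesis using True unfolding g_def by simp
  qed (simp add: g_def)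
  have "F a = (\<integral>\<^sup>+t. ennreal (indicator {0<..} t * nd t * exp (- a' * t)) + ennreal (g t) \<partial>lborel)"
    unfolding F_def
  proof (intro nn_integral_cong)
    fix t
    show "ennreal (indicator {0<..} t * nd t * exp (- a * t)) = ennreal (indicator {0<..} t * nd t * exp (- a' * t)) + ennreal (g t)"
      using g0[of t] by (subst ennreal_plus[symmetric]) (auto simp: g_def algebra_simps)
  qed
  also have "\<dots> = F a' + (\<integral>\<^sup>+t. ennreal (g t) \<partial>lborel)"
    unfolding F_def by (rule nn_integral_add) (auto simp: g_def)
  finally have Fa: "F a = F a' + (\<integral>\<^sup>+t. ennreal (g t) \<partial>lborel)" .
  define k where "k = exp (- ((abs 1 + 1 + abs mu)^2) / 2) / sqrt (2*pi) * (exp (- a * 2) * (1 - exp (- (a' - a))))"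
  have gpos: "0 < (\<integral>\<^sup>+t. ennreal (g t) \<partial>lborel)"
  proof (rule pos_int[where k=k and a=1])
    show "g \<in> borel_measurable borel" unfolding g_def by measurable
    show "0 < k" unfolding k_def using aa by simp
    fix t :: real assume t: "t \<in> {1<..<1+1}"
    have ex1: "exp (- (a' - a)) \<le> 1" using aa by simp
    have l1: "exp (- ((abs 1 + 1 + abs mu)^2) / 2) / sqrt (2*pi) \<le> nd t" by (rule nd_lower[OF t])
    have "a * t \<le> a * 2" using t a by (intro mult_left_mono) auto
    then have l2: "exp (- a * 2) \<le> exp (- a * t)" by simp
    have "(a' - a) * 1 \<le> (a' - a) * t" using t aa by (intro mult_left_mono) auto
    then have "- (a' - a) * t \<le> - (a' - a)" by (simp add: algebra_simps)
    then have l3: "1 - exp (- (a' - a)) \<le> 1 - exp (- (a' - a) * t)" by simp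
    have "exp (- a * 2) * (1 - exp (- (a' - a))) \<le> exp (- a * t) * (1 - exp (- (a' - a) * t))"
      by (rule mult_mono[OF l2 l3]) (use aa in simp_all)
    also have "\<dots> = exp (- a * t) - exp (- a' * t)" by (simp add: algebra_simps flip: exp_add)
    finally have l4: "exp (- a * 2) * (1 - exp (- (a' - a))) \<le> exp (- a * t) - exp (- a' * t)" .
    have "k \<le> nd t * (exp (- a * t) - exp (- a' * t))"
      unfolding k_def by (rule mult_mono[OF l1 l4]) (use aa in simp_all)
    then show "k \<le> g t" using t unfolding g_def by simp
  qed
  have "F a' < F a"
  proof -
    have "F a' \<noteq> \<top>" using F_fin[of a'] a aa by simp
    then have "F a' + 0 < F a' + (\<integral>\<^sup>+t. ennreal (g t) \<partial>lborel)"
      using gpos by (subst ennreal_add_left_cancel_less) simp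
    then show ?thesis unfolding Fa by simp
  qed
  moreover have "F a = ennreal (f a)" "F a' = ennreal (f a')" using F_fin[of a] F_fin[of a'] a aa by auto
  ultimately have "ennreal (f a') < ennreal (f a)" by simp
  then show ?thesis by (rule ennreal_less_iff[OF f_nonneg, THEN iffD1])
qed

lemma upM_le: "upM x \<le> ennreal (exp (- (2*mu) * b)) * up x"
proof -
  have "upM x \<le> (\<integral>\<^sup>+z. ennreal (exp (- (2*mu) * b)) * ennreal (indicator {b<..} (x + z) * nd z) \<partial>lborel)"
    unfolding upM_def
  proof (intro nn_integral_mono)
    fix z
    have "indicator {b<..} (x + z) * exp (- (2*mu) * (x + z)) * nd z \<le> exp (- (2*mu) * b) * (indicator {b<..} (x + z) * nd z)"
    proof (cases "x + z > b")
      case True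
      then have "exp (- (2*mu) * (x + z)) \<le> exp (- (2*mu) * b)" using mu_pos by simp
      then show ?thesis using True by (simp add: mult_right_mono)
    qed simp
    then show "ennreal (indicator {b<..} (x + z) * exp (- (2*mu) * (x + z)) * nd z) \<le> ennreal (exp (- (2*mu) * b)) * ennreal (indicator {b<..} (x + z) * nd z)"
      by (simp add: ennreal_mult[symmetric] ennreal_leI)
  qed
  also have "\<dots> = ennreal (exp (- (2*mu) * b)) * up x"
    unfolding up_def by (rule nn_integral_cmult) measurable
  finally show ?thesis .
qed

lemma dnM_ge: "ennreal (exp ((2*mu) * b)) * dn x \<le> dnM x"
proof -
  have "ennreal (exp ((2*mu) * b)) * dn x = (\<integral>\<^sup>+z. ennreal (exp ((2*mu) * b)) * ennreal (indicator {..< -b} (x + z) * nd z) \<partial>lborel)"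
    unfolding dn_def by (rule nn_integral_cmult[symmetric]) measurable
  also have "\<dots> \<le> dnM x"
    unfolding dnM_def
  proof (intro nn_integral_mono)
    fix z
    have "exp ((2*mu) * b) * (indicator {..< -b} (x + z) * nd z) \<le> indicator {..< -b} (x + z) * exp (- (2*mu) * (x + z)) * nd z"
    proof (cases "x + z < -b")
      case True
      have "mu * b \<le> mu * (- (x + z))" using True mu_pos by (intro mult_left_mono) auto
      then have "exp ((2*mu) * b) \<le> exp (- (2*mu) * (x + z))" by (simp add: algebra_simps)
      then show ?thesis using True by (simp add: mult_right_mono)
    qed simp
    then show "ennreal (exp ((2*mu) * b)) * ennreal (indicator {..< -b} (x + z) * nd z) \<le> ennreal (indicator {..< -b} (x + z) * exp (- (2*mu) * (x + z)) * nd z)"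
      by (simp add: ennreal_mult[symmetric] ennreal_leI)
  qed
  finally show ?thesis .
qed

definition r1 where "r1 = f (2*mu) / f 0"
definition r2 where "r2 = f 0 / f (2*mu)"

lemma f0_pos: "f 0 > 0" by (rule f_pos) simp
lemma f2_pos: "f (2*mu) > 0" by (rule f_pos) (use mu_pos in simp)

lemma upM_ge: assumes "x \<le> b" shows "ennreal (r1 * exp (- (2*mu) * b)) * up x \<le> upM x"
proof -
  define c where "c = b - x"
  have c: "c \<ge> 0" using assms c_def by simp
  define K where "K = exp (c*mu - c^2/2)"
  have "r1 * exp (- (2*mu) * b) * (K * f c) \<le> exp (- (2*mu) * b) * K * f (2*mu + c)"
  proof -
    have "f (2*mu) * f c \<le> f 0 * f (c + 2*mu)" using cheb_f[OF c] by (simp add: mult.commute)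
    then have "r1 * f c \<le> f (2*mu + c)" unfolding r1_def using f0_pos by (simp add: field_simps add.commute)
    then show ?thesis unfolding K_def by (simp add: mult_left_mono mult.assoc mult.left_commute)
  qed
  then have "ennreal (r1 * exp (- (2*mu) * b)) * ennreal (K * f c) \<le> ennreal (exp (- (2*mu) * b) * K) * ennreal (f (2*mu + c))"
    by (simp add: ennreal_mult[symmetric] r1_def f_nonneg ennreal_leI K_def f0_pos f2_pos)
  then show ?thesis
    unfolding upM_eq up_eq c_def[symmetric] K_def[symmetric] using c mu_pos
    by (simp add: F_fin ennreal_mult K_def f_nonneg mult.assoc)
qed

end


context gw begin

lemma dnM_le: assumes "-b \<le> x" shows "dnM x \<le> ennreal (r2 * exp ((2*mu) * b)) * dn x"
proof -
  define d where "d = x + b"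
  have d: "d \<ge> 0" using assms d_def by simp
  define K where "K = exp (- (d + 2*mu) * d / 2)"
  have "exp ((2*mu) * b) * K * f d \<le> r2 * exp ((2*mu) * b) * (K * f (d + 2*mu))"
  proof -
    have "f d * f (2*mu) \<le> f 0 * f (d + 2*mu)" using cheb_f[OF d] by simp
    then have "f d \<le> r2 * f (d + 2*mu)" unfolding r2_def using f2_pos by (simp add: field_simps)
    then show ?thesis unfolding K_def by (simp add: mult_left_mono mult.assoc mult.left_commute)
  qed
  then have "ennreal (exp ((2*mu) * b) * K) * ennreal (f d) \<le> ennreal (r2 * exp ((2*mu) * b)) * ennreal (K * f (d + 2*mu))"
    by (simp add: ennreal_mult[symmetric] r2_def f_nonneg ennreal_leI K_def f0_pos f2_pos)
  then show ?thesis
    unfolding dnM_eq dn_eq d_def[symmetric] K_def[symmetric] using d mu_pos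
    by (simp add: F_fin ennreal_mult K_def f_nonneg mult.assoc)
qed

lemma ind3: "indicator {b<..} y + indicator {..< -b} y + indicator {-b..b} y = (1::real)"
  using b_pos by (auto split: split_indicator)

lemma sum_up: "up x + dn x + st x = 1"
proof -
  have "up x + dn x + st x = (\<integral>\<^sup>+z. ennreal (indicator {b<..} (x + z) * nd z) + ennreal (indicator {..< -b} (x + z) * nd z) + ennreal (indicator {-b..b} (x + z) * nd z) \<partial>lborel)"
    unfolding up_def dn_def st_def by (subst nn_integral_add; simp add: nn_integral_add)+
  also have "\<dots> = (\<integral>\<^sup>+z. ennreal (nd z) \<partial>lborel)"
  proof (intro nn_integral_cong)
    fix z
    have "ennreal (indicator {b<..} (x + z) * nd z) + ennreal (indicator {..< -b} (x + z) * nd z) + ennreal (indicator {-b..b} (x + z) * nd z)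
      = ennreal ((indicator {b<..} (x + z) + indicator {..< -b} (x + z) + indicator {-b..b} (x + z)) * nd z)"
      by (simp add: ennreal_plus[symmetric] algebra_simps del: ennreal_plus)
    then show "ennreal (indicator {b<..} (x + z) * nd z) + ennreal (indicator {..< -b} (x + z) * nd z) + ennreal (indicator {-b..b} (x + z) * nd z) = ennreal (nd z)"
      by (simp only: ind3) simp
  qed
  finally show ?thesis by (simp add: nd_int)
qed

lemma sum_upM: "upM x + dnM x + stM x = ennreal (exp (- (2*mu) * x))"
proof -
  have "upM x + dnM x + stM x = (\<integral>\<^sup>+z. ennreal (indicator {b<..} (x + z) * exp (- (2*mu) * (x + z)) * nd z) + ennreal (indicator {..< -b} (x + z) * exp (- (2*mu) * (x + z)) * nd z) + ennreal (indicator {-b..b} (x + z) * exp (- (2*mu) * (x + z)) * nd z) \<partial>lborel)"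
    unfolding upM_def dnM_def stM_def by (subst nn_integral_add; simp add: nn_integral_add)+
  also have "\<dots> = (\<integral>\<^sup>+z. ennreal (exp (- (2*mu) * x)) * ennreal (normal_density (-mu) 1 z) \<partial>lborel)"
  proof (intro nn_integral_cong)
    fix z
    have "ennreal (indicator {b<..} (x + z) * exp (- (2*mu) * (x + z)) * nd z) + ennreal (indicator {..< -b} (x + z) * exp (- (2*mu) * (x + z)) * nd z) + ennreal (indicator {-b..b} (x + z) * exp (- (2*mu) * (x + z)) * nd z)
      = ennreal ((indicator {b<..} (x + z) + indicator {..< -b} (x + z) + indicator {-b..b} (x + z)) * (exp (- (2*mu) * (x + z)) * nd z))"
      by (simp add: ennreal_plus[symmetric] algebra_simps del: ennreal_plus)
    also have "\<dots> = ennreal (exp (- (2*mu) * x) * (exp (- (2*mu) * z) * nd z))"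
      by (simp only: ind3) (simp add: algebra_simps flip: exp_add)
    also have "\<dots> = ennreal (exp (- (2*mu) * x)) * ennreal (normal_density (-mu) 1 z)"
      by (simp only: nd_tilt) (simp add: ennreal_mult)
    finally show "ennreal (indicator {b<..} (x + z) * exp (- (2*mu) * (x + z)) * nd z) + ennreal (indicator {..< -b} (x + z) * exp (- (2*mu) * (x + z)) * nd z) + ennreal (indicator {-b..b} (x + z) * exp (- (2*mu) * (x + z)) * nd z) = ennreal (exp (- (2*mu) * x)) * ennreal (normal_density (-mu) 1 z)" .
  qed
  also have "\<dots> = ennreal (exp (- (2*mu) * x))"
    by (subst nn_integral_cmult) (simp_all add: nd_int)
  finally show ?thesis .
qed

definition eta where "eta = exp ((2*b)*mu - (2*b)^2/2) * f (2*b)"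

lemma eta_pos: "eta > 0" unfolding eta_def using f_pos[of "2*b"] b_pos by simp

lemma up_ge_eta: assumes "-b \<le> x" shows "ennreal eta \<le> up x"
proof -
  have "up (-b) = ennreal eta" unfolding up_eq eta_def using b_pos
    by (simp add: F_fin ennreal_mult f_nonneg)
  moreover have "up (-b) \<le> up x" unfolding up_def
    by (intro nn_integral_mono ennreal_leI mult_right_mono) (use assms in \<open>auto split: split_indicator\<close>)
  ultimately show ?thesis by simp
qed

lemma upM_strict: "upM 0 < ennreal (exp (- (2*mu) * b)) * up 0"
proof -
  have "f (2*mu + b) < f b" using F_strict[of b "2*mu + b"] b_pos mu_pos by simp
  then have "exp (- (2*mu) * b) * exp (b*mu - b^2/2) * f (2*mu + b) < exp (- (2*mu) * b) * (exp (b*mu - b^2/2) * f b)"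
    by simp
  then have "ennreal (exp (- (2*mu) * b) * exp (b*mu - b^2/2) * f (2*mu + b)) < ennreal (exp (- (2*mu) * b) * (exp (b*mu - b^2/2) * f b))"
    using f_pos[of b] b_pos by (intro ennreal_lessI) auto
  then show ?thesis unfolding upM_eq up_eq using b_pos mu_pos by (simp add: F_fin ennreal_mult[symmetric] f_nonneg)
qed

lemma dnM_strict: "ennreal (exp ((2*mu) * b)) * dn 0 < dnM 0"
proof -
  have "f (b + 2*mu) < f b" using F_strict[of b "b + 2*mu"] b_pos mu_pos by simp
  then have "exp ((2*mu) * b) * (exp (- (b + 2*mu) * b / 2) * f (b + 2*mu)) < exp ((2*mu) * b) * exp (- (b + 2*mu) * b / 2) * f b"
    by simp
  then have "ennreal (exp ((2*mu) * b) * (exp (- (b + 2*mu) * b / 2) * f (b + 2*mu))) < ennreal (exp ((2*mu) * b) * exp (- (b + 2*mu) * b / 2) * f b)"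
    using f_pos[of b] b_pos by (intro ennreal_lessI) auto
  then show ?thesis unfolding dnM_eq dn_eq using b_pos mu_pos by (simp add: F_fin ennreal_mult[symmetric] f_nonneg)
qed

end


definition Gle :: "real \<Rightarrow> ennreal" where "Gle a = (\<integral>\<^sup>+s. ennreal (indicator {..a} s * std_normal_density s) \<partial>lborel)"
definition Ggt :: "real \<Rightarrow> ennreal" where "Ggt a = (\<integral>\<^sup>+s. ennreal (indicator {a<..} s * std_normal_density s) \<partial>lborel)"

lemma Phi_Gle: "std_normal_cdf a = enn2real (Gle a)"
proof -
  have "std_normal_cdf a = measure (density lborel std_normal_density) {..a}"
    unfolding std_normal_cdf_def by (simp add: cdf_def2)
  also have "\<dots> = enn2real (emeasure (density lborel std_normal_density) {..a})"
    by (simp add: measure_def)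
  also have "emeasure (density lborel std_normal_density) {..a} = Gle a"
    unfolding Gle_def by (subst emeasure_density) (auto intro!: nn_integral_cong simp: mult.commute ennreal_mult' split: split_indicator)
  finally show ?thesis .
qed

lemma Gle_Ggt: "Gle a + Ggt a = 1"
proof -
  have "Gle a + Ggt a = (\<integral>\<^sup>+s. ennreal (indicator {..a} s * std_normal_density s) + ennreal (indicator {a<..} s * std_normal_density s) \<partial>lborel)"
    unfolding Gle_def Ggt_def by (rule nn_integral_add[symmetric]) auto
  also have "\<dots> = (\<integral>\<^sup>+s. ennreal (std_normal_density s) \<partial>lborel)"
    by (intro nn_integral_cong) (auto split: split_indicator)
  finally show ?thesis by (simp add: nd_int)
qed

lemma sum1: "(x::ennreal) + y = 1 \<Longrightarrow> enn2real x + enn2real y = 1"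
proof -
  assume h: "x + y = 1"
  have "x \<noteq> \<top>" "y \<noteq> \<top>" using h by auto
  then have "enn2real (x + y) = enn2real x + enn2real y" by (simp add: enn2real_plus less_top)
  with h show ?thesis by simp
qed

lemma Ggt_refl: "Ggt a = Gle (- a)"
proof -
  have "Ggt a = (\<integral>\<^sup>+s. ennreal (indicator {a<..} (0 + (-1) * s) * std_normal_density (0 + (-1) * s)) \<partial>lborel)"
    unfolding Ggt_def by (subst nn_integral_real_affine[where c="-1" and t=0]) auto
  also have "\<dots> = Gle (- a)"
    unfolding Gle_def
  proof (intro nn_integral_cong_AE)
    show "AE s in lborel. ennreal (indicator {a<..} (0 + (-1) * s) * std_normal_density (0 + (-1) * s)) = ennreal (indicator {..- a} s * std_normal_density s)"
      using AE_lborel_singleton[of "-a"]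
      by eventually_elim (auto split: split_indicator simp: std_normal_density_def)
  qed
  finally show ?thesis .
qed

context gw begin

lemma F0_Ggt: "F 0 = Ggt (- mu)"
proof -
  have "F 0 = (\<integral>\<^sup>+s. ennreal (indicator {0<..} (mu + 1 * s) * nd (mu + 1 * s) * exp (- 0 * (mu + 1 * s))) \<partial>lborel)"
    unfolding F_def by (subst nn_integral_real_affine[where c=1 and t=mu]) auto
  also have "\<dots> = Ggt (- mu)"
    unfolding Ggt_def by (intro nn_integral_cong) (auto split: split_indicator simp: nd_std[of mu] nd_std[of "-mu"])
  finally show ?thesis .
qed

lemma F2_Ggt: "F (2*mu) = Ggt mu"
proof -
  have "F (2*mu) = (\<integral>\<^sup>+t. ennreal (indicator {0<..} t * normal_density (-mu) 1 t) \<partial>lborel)"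
    unfolding F_def by (intro nn_integral_cong) (simp add: nd_tilt[symmetric] mult_ac)
  also have "\<dots> = (\<integral>\<^sup>+s. ennreal (indicator {0<..} (-mu + 1 * s) * normal_density (-mu) 1 (-mu + 1 * s)) \<partial>lborel)"
    by (subst nn_integral_real_affine[where c=1 and t="-mu"]) auto
  also have "\<dots> = Ggt mu"
    unfolding Ggt_def by (intro nn_integral_cong) (auto split: split_indicator simp: nd_std[of mu] nd_std[of "-mu"])
  finally show ?thesis .
qed

lemma r1_R: "R_ratio (- mu) = r1"
proof -
  have "std_normal_cdf (- mu) = f (2*mu)"
    unfolding Phi_Gle f_def F2_Ggt Ggt_refl ..
  moreover have "1 - std_normal_cdf (- mu) = f 0"
  proof -
    have "enn2real (Gle (-mu)) + enn2real (Ggt (-mu)) = 1"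
      by (rule sum1[OF Gle_Ggt])
    then show ?thesis unfolding Phi_Gle f_def F0_Ggt by simp
  qed
  ultimately show ?thesis unfolding R_ratio_def r1_def by simp
qed

lemma r2_R: "R_ratio mu = r2"
proof -
  have "std_normal_cdf mu = f 0"
    unfolding Phi_Gle f_def F0_Ggt Ggt_refl by simp
  moreover have "1 - std_normal_cdf mu = f (2*mu)"
  proof -
    have "enn2real (Gle mu) + enn2real (Ggt mu) = 1"
      by (rule sum1[OF Gle_Ggt])
    then show ?thesis unfolding Phi_Gle f_def F2_Ggt by simp
  qed
  ultimately show ?thesis unfolding R_ratio_def r2_def by simp
qed

end


lemma measurable_component_any[measurable]:
  "(\<lambda>v. v i) \<in> borel_measurable (PiM I (\<lambda>_. borel :: real measure))"
proof (cases "i \<in> I")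
  case True then show ?thesis by (rule measurable_component_singleton)
next
  case False
  have "(\<lambda>v. undefined) \<in> borel_measurable (PiM I (\<lambda>_. borel :: real measure))" by simp
  then show ?thesis
    by (rule measurable_cong[THEN iffD1, rotated]) (use False in \<open>auto simp: space_PiM PiE_def extensional_def\<close>)
qed

locale walk = gw mu b + prob_space M for mu b :: real and M :: "'a measure" +
  fixes Z :: "nat \<Rightarrow> 'a \<Rightarrow> real"
  assumes indep: "indep_vars (\<lambda>_. borel) Z UNIV"
    and distZ: "\<And>i. distributed M lborel (Z i) (normal_density mu 1)"
begin

abbreviation "S \<equiv> partial_sum Z"

definition Nind :: "nat \<Rightarrow> 'a \<Rightarrow> real" where
  "Nind k \<omega> = (if \<forall>j\<in>{1..k}. \<bar>S j \<omega>\<bar> \<le> b then 1 else 0)"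

lemma Z_meas[measurable]: "Z i \<in> borel_measurable M"
  using distributed_measurable[OF distZ[of i]] by simp

lemma S_meas[measurable]: "S k \<in> borel_measurable M"
  unfolding partial_sum_def[abs_def] by measurable

lemma Nind_meas[measurable]: "Nind k \<in> borel_measurable M"
  unfolding Nind_def[abs_def] by measurable

lemma Nind_01: "Nind k \<omega> = 0 \<or> Nind k \<omega> = 1" unfolding Nind_def by auto
lemma Nind_nonneg: "Nind k \<omega> \<ge> 0" unfolding Nind_def by auto

lemma indepY: "indep_var borel (\<lambda>\<omega>. (Nind k \<omega>, S k \<omega>)) borel (\<lambda>\<omega>. (Z k \<omega>, 0::real))"
proof -
  have iv: "indep_var (PiM {..<k} (\<lambda>_. borel)) (\<lambda>\<omega>. restrict (\<lambda>i. Z i \<omega>) {..<k}) (PiM {k} (\<lambda>_. borel)) (\<lambda>\<omega>. restrict (\<lambda>i. Z i \<omega>) {k})"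
    by (rule indep_var_restrict[OF indep]) auto
  define h1 where "h1 = (\<lambda>v::nat \<Rightarrow> real. ((if \<forall>j\<in>{1..k}. \<bar>\<Sum>i<j. v i\<bar> \<le> b then 1 else 0)::real, \<Sum>i<k. v i))"
  define h2 where "h2 = (\<lambda>v::nat \<Rightarrow> real. (v k, 0::real))"
  have m1: "h1 \<in> measurable (PiM {..<k} (\<lambda>_. borel)) borel" unfolding h1_def by measurable
  have m2: "h2 \<in> measurable (PiM {k} (\<lambda>_. borel)) borel" unfolding h2_def by measurable
  have "indep_var borel (h1 \<circ> (\<lambda>\<omega>. restrict (\<lambda>i. Z i \<omega>) {..<k})) borel (h2 \<circ> (\<lambda>\<omega>. restrict (\<lambda>i. Z i \<omega>) {k}))"
    by (rule indep_var_compose[OF iv m1 m2])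
  moreover have "h1 \<circ> (\<lambda>\<omega>. restrict (\<lambda>i. Z i \<omega>) {..<k}) = (\<lambda>\<omega>. (Nind k \<omega>, S k \<omega>))"
  proof
    fix \<omega>
    have "(\<Sum>i<j. restrict (\<lambda>i. Z i \<omega>) {..<k} i) = S j \<omega>" if "j \<le> k" for j
      unfolding partial_sum_def using that by (intro sum.cong) auto
    then show "(h1 \<circ> (\<lambda>\<omega>. restrict (\<lambda>i. Z i \<omega>) {..<k})) \<omega> = (Nind k \<omega>, S k \<omega>)"
      unfolding h1_def Nind_def by auto
  qed
  moreover have "h2 \<circ> (\<lambda>\<omega>. restrict (\<lambda>i. Z i \<omega>) {k}) = (\<lambda>\<omega>. (Z k \<omega>, 0::real))"
    unfolding h2_def by auto
  ultimately show ?thesis by simp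
qed


lemma cond_inner:
  fixes g :: "real \<Rightarrow> real \<Rightarrow> real"
  assumes gm[measurable]: "case_prod g \<in> borel_measurable (borel \<Otimes>\<^sub>M borel)" and g0: "\<And>s z. 0 \<le> g s z"
    and n: "n \<ge> 0"
  shows "(\<integral>\<^sup>+\<omega>. ennreal (n * g s (Z k \<omega>)) \<partial>M) = ennreal n * (\<integral>\<^sup>+z. ennreal (g s z * nd z) \<partial>lborel)"
proof -
  have gs[measurable]: "(\<lambda>z. g s z) \<in> borel_measurable borel"
  proof -
    have "(\<lambda>z. case_prod g (s, z)) \<in> borel_measurable borel" by (rule measurable_compose[OF _ gm]) simp
    then show ?thesis by simp
  qed
  have gsm: "(\<lambda>z. ennreal (g s z * nd z)) \<in> borel_measurable borel" by measurable
  have "(\<integral>\<^sup>+\<omega>. ennreal (n * g s (Z k \<omega>)) \<partial>M) = (\<integral>\<^sup>+z. ennreal (n * g s z) \<partial>(distr M lborel (Z k)))"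
    by (rule nn_integral_distr[symmetric]) (simp, simp add: measurable_distr_eq1)
  also have "\<dots> = (\<integral>\<^sup>+z. ennreal (n * g s z) \<partial>(density lborel nd))"
    using distributed_distr_eq_density[OF distZ[of k]] by simp
  also have "\<dots> = (\<integral>\<^sup>+z. ennreal (nd z) * ennreal (n * g s z) \<partial>lborel)"
    by (rule nn_integral_density) auto
  also have "\<dots> = (\<integral>\<^sup>+z. ennreal n * ennreal (g s z * nd z) \<partial>lborel)"
    using n g0 by (intro nn_integral_cong) (simp add: ennreal_mult[symmetric] mult_ac)
  also have "\<dots> = ennreal n * (\<integral>\<^sup>+z. ennreal (g s z * nd z) \<partial>lborel)"
    by (rule nn_integral_cmult) (simp add: gsm)
  finally show ?thesis .
qed

lemma cond:
  fixes g :: "real \<Rightarrow> real \<Rightarrow> real"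
  assumes gm[measurable]: "case_prod g \<in> borel_measurable (borel \<Otimes>\<^sub>M borel)" and g0: "\<And>s z. 0 \<le> g s z"
  shows "(\<integral>\<^sup>+\<omega>. ennreal (Nind k \<omega> * g (S k \<omega>) (Z k \<omega>)) \<partial>M)
       = (\<integral>\<^sup>+\<omega>. ennreal (Nind k \<omega>) * (\<integral>\<^sup>+z. ennreal (g (S k \<omega>) z * nd z) \<partial>lborel) \<partial>M)"
proof -
  define Y where "Y = (\<lambda>\<omega>. (Nind k \<omega>, S k \<omega>))"
  define W where "W = (\<lambda>\<omega>. (Z k \<omega>, 0::real))"
  have [measurable]: "Y \<in> borel_measurable M" "W \<in> borel_measurable M" unfolding Y_def W_def by measurable
  define Fp where "Fp = (\<lambda>p::(real\<times>real)\<times>(real\<times>real). ennreal (fst (fst p) * g (snd (fst p)) (fst (snd p))))"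
  have "Fp \<in> borel_measurable ((borel \<Otimes>\<^sub>M borel) \<Otimes>\<^sub>M (borel \<Otimes>\<^sub>M borel))" unfolding Fp_def by measurable
  then have [measurable]: "Fp \<in> borel_measurable (borel \<Otimes>\<^sub>M borel)" by (simp add: borel_prod)
  have gsnd: "(\<lambda>p. ennreal (g (fst p) (snd p) * nd (snd p))) \<in> borel_measurable (borel \<Otimes>\<^sub>M lborel)"
  proof -
    have "(\<lambda>p. ennreal (g (fst p) (snd p) * nd (snd p))) \<in> borel_measurable (borel \<Otimes>\<^sub>M borel)" by measurable
    then show ?thesis by (simp cong: measurable_cong_sets)
  qed
  have hs: "(\<lambda>s. \<integral>\<^sup>+z. ennreal (g s z * nd z) \<partial>lborel) \<in> borel_measurable borel"
    by (rule lborel.borel_measurable_nn_integral) (use gsnd in \<open>simp add: case_prod_beta'\<close>)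
  have hm: "(\<lambda>y::real\<times>real. ennreal (fst y) * (\<integral>\<^sup>+z. ennreal (g (snd y) z * nd z) \<partial>lborel)) \<in> borel_measurable borel"
  proof -
    have "(\<lambda>y::real\<times>real. ennreal (fst y) * (\<integral>\<^sup>+z. ennreal (g (snd y) z * nd z) \<partial>lborel)) \<in> borel_measurable (borel \<Otimes>\<^sub>M borel)"
      using hs by measurable
    then show ?thesis by (simp add: borel_prod)
  qed
  have ind: "distr M borel Y \<Otimes>\<^sub>M distr M borel W = distr M (borel \<Otimes>\<^sub>M borel) (\<lambda>\<omega>. (Y \<omega>, W \<omega>))"
    using indepY[of k] unfolding indep_var_distribution_eq Y_def W_def by blast
  interpret DY: prob_space "distr M borel Y" by (rule prob_space_distr) measurable
  interpret DW: prob_space "distr M borel W" by (rule prob_space_distr) measurable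
  have "(\<integral>\<^sup>+\<omega>. ennreal (Nind k \<omega> * g (S k \<omega>) (Z k \<omega>)) \<partial>M) = (\<integral>\<^sup>+\<omega>. Fp (Y \<omega>, W \<omega>) \<partial>M)"
    unfolding Fp_def Y_def W_def by simp
  also have "\<dots> = (\<integral>\<^sup>+p. Fp p \<partial>(distr M (borel \<Otimes>\<^sub>M borel) (\<lambda>\<omega>. (Y \<omega>, W \<omega>))))"
    by (rule nn_integral_distr[symmetric]) measurable
  also have "\<dots> = (\<integral>\<^sup>+p. Fp p \<partial>(distr M borel Y \<Otimes>\<^sub>M distr M borel W))"
    unfolding ind ..
  also have "\<dots> = (\<integral>\<^sup>+y. \<integral>\<^sup>+w. Fp (y, w) \<partial>distr M borel W \<partial>distr M borel Y)"
    by (rule DW.nn_integral_fst[symmetric]) measurable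
  also have "\<dots> = (\<integral>\<^sup>+y. ennreal (fst y) * (\<integral>\<^sup>+z. ennreal (g (snd y) z * nd z) \<partial>lborel) \<partial>distr M borel Y)"
  proof (rule nn_integral_cong_AE)
    have cl: "{x::real\<times>real. 0 \<le> fst x} \<in> sets borel"
      by (rule borel_closed, rule closed_Collect_le) (simp_all add: continuous_on_const continuous_on_fst continuous_on_id)
    have "AE y in distr M borel Y. fst y \<ge> 0"
      using cl by (subst AE_distr_iff) (auto simp: Y_def Nind_nonneg)
    then show "AE y in distr M borel Y. (\<integral>\<^sup>+w. Fp (y, w) \<partial>distr M borel W) = ennreal (fst y) * (\<integral>\<^sup>+z. ennreal (g (snd y) z * nd z) \<partial>lborel)"
    proof eventually_elim
      case (elim y)
      have "(\<integral>\<^sup>+w. Fp (y, w) \<partial>distr M borel W) = (\<integral>\<^sup>+\<omega>. Fp (y, W \<omega>) \<partial>M)"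
        by (rule nn_integral_distr) measurable
      also have "\<dots> = (\<integral>\<^sup>+\<omega>. ennreal (fst y * g (snd y) (Z k \<omega>)) \<partial>M)"
        unfolding Fp_def W_def by simp
      also have "\<dots> = ennreal (fst y) * (\<integral>\<^sup>+z. ennreal (g (snd y) z * nd z) \<partial>lborel)"
        by (rule cond_inner[OF gm g0 elim])
      finally show ?case .
    qed
  qed
  also have "\<dots> = (\<integral>\<^sup>+\<omega>. ennreal (Nind k \<omega>) * (\<integral>\<^sup>+z. ennreal (g (S k \<omega>) z * nd z) \<partial>lborel) \<partial>M)"
    by (subst nn_integral_distr) (auto simp: Y_def intro!: hm)
  finally show ?thesis .
qed

end


context gw begin

lemma meas_int:
  fixes g :: "real \<Rightarrow> real \<Rightarrow> real"
  assumes gm[measurable]: "case_prod g \<in> borel_measurable (borel \<Otimes>\<^sub>M borel)"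
  shows "(\<lambda>s. \<integral>\<^sup>+z. ennreal (g s z * nd z) \<partial>lborel) \<in> borel_measurable borel"
proof -
  have gsnd: "(\<lambda>p. ennreal (g (fst p) (snd p) * nd (snd p))) \<in> borel_measurable (borel \<Otimes>\<^sub>M lborel)"
  proof -
    have "(\<lambda>p. ennreal (g (fst p) (snd p) * nd (snd p))) \<in> borel_measurable (borel \<Otimes>\<^sub>M borel)" by measurable
    then show ?thesis by (simp cong: measurable_cong_sets)
  qed
  show ?thesis
    by (rule lborel.borel_measurable_nn_integral) (use gsnd in \<open>simp add: case_prod_beta'\<close>)
qed

lemma up_meas[measurable]: "up \<in> borel_measurable borel"
  unfolding up_def[abs_def] by (rule meas_int[where g="\<lambda>s z. indicator {b<..} (s + z)"]) measurable
lemma dn_meas[measurable]: "dn \<in> borel_measurable borel"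
  unfolding dn_def[abs_def] by (rule meas_int[where g="\<lambda>s z. indicator {..< -b} (s + z)"]) measurable
lemma st_meas[measurable]: "st \<in> borel_measurable borel"
  unfolding st_def[abs_def] by (rule meas_int[where g="\<lambda>s z. indicator {-b..b} (s + z)"]) measurable
lemma upM_meas[measurable]: "upM \<in> borel_measurable borel"
  unfolding upM_def[abs_def] by (rule meas_int[where g="\<lambda>s z. indicator {b<..} (s + z) * exp (- (2*mu) * (s + z))"]) measurable
lemma dnM_meas[measurable]: "dnM \<in> borel_measurable borel"
  unfolding dnM_def[abs_def] by (rule meas_int[where g="\<lambda>s z. indicator {..< -b} (s + z) * exp (- (2*mu) * (s + z))"]) measurable
lemma stM_meas[measurable]: "stM \<in> borel_measurable borel"
  unfolding stM_def[abs_def] by (rule meas_int[where g="\<lambda>s z. indicator {-b..b} (s + z) * exp (- (2*mu) * (s + z))"]) measurable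

end

context walk begin

definition I :: "nat \<Rightarrow> (real \<Rightarrow> ennreal) \<Rightarrow> ennreal" where
  "I k h = (\<integral>\<^sup>+\<omega>. ennreal (Nind k \<omega>) * h (S k \<omega>) \<partial>M)"

lemma S_Suc: "S (Suc k) \<omega> = S k \<omega> + Z k \<omega>"
  unfolding partial_sum_def by simp

lemma S_0: "S 0 \<omega> = 0" unfolding partial_sum_def by simp

lemma Nind_0: "Nind 0 \<omega> = 1" unfolding Nind_def by simp

lemma Nind_Suc: "Nind (Suc k) \<omega> = Nind k \<omega> * indicator {-b..b} (S (Suc k) \<omega>)"
  unfolding Nind_def by (auto split: split_indicator simp: atLeastAtMostSuc_conv abs_le_iff)

lemma Nind_bound: "Nind k \<omega> \<noteq> 0 \<Longrightarrow> \<bar>S k \<omega>\<bar> \<le> b"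
  using b_pos unfolding Nind_def by (cases k) (auto simp: S_0 split: if_splits)

lemma I_0: "I 0 h = h 0"
  unfolding I_def by (simp add: Nind_0 S_0 emeasure_space_1)

lemma I_mono:
  assumes h: "\<And>x. \<bar>x\<bar> \<le> b \<Longrightarrow> h1 x \<le> ennreal c * h2 x" and [measurable]: "h2 \<in> borel_measurable borel"
  shows "I k h1 \<le> ennreal c * I k h2"
proof -
  have "I k h1 \<le> (\<integral>\<^sup>+\<omega>. ennreal c * (ennreal (Nind k \<omega>) * h2 (S k \<omega>)) \<partial>M)"
    unfolding I_def
  proof (intro nn_integral_mono)
    fix \<omega>
    show "ennreal (Nind k \<omega>) * h1 (S k \<omega>) \<le> ennreal c * (ennreal (Nind k \<omega>) * h2 (S k \<omega>))"
    proof (cases "Nind k \<omega> = 0")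
      case False
      then have "Nind k \<omega> = 1" using Nind_01 by blast
      then show ?thesis using h[OF Nind_bound[OF False]] by simp
    qed simp
  qed
  also have "\<dots> = ennreal c * I k h2"
    unfolding I_def by (rule nn_integral_cmult) measurable
  finally show ?thesis .
qed

lemma I_bound:
  assumes h: "\<And>x. \<bar>x\<bar> \<le> b \<Longrightarrow> h x \<le> ennreal c"
  shows "I k h \<le> ennreal c"
proof -
  have "I k h \<le> (\<integral>\<^sup>+\<omega>. ennreal c \<partial>M)"
    unfolding I_def
  proof (intro nn_integral_mono)
    fix \<omega>
    show "ennreal (Nind k \<omega>) * h (S k \<omega>) \<le> ennreal c"
    proof (cases "Nind k \<omega> = 0")
      case False
      then have "Nind k \<omega> = 1" using Nind_01 by blast
      then show ?thesis using h[OF Nind_bound[OF False]] by simp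
    qed simp
  qed
  also have "\<dots> = ennreal c" by (simp add: emeasure_space_1)
  finally show ?thesis .
qed

lemma I_add:
  assumes [measurable]: "h1 \<in> borel_measurable borel" "h2 \<in> borel_measurable borel"
  shows "I k (\<lambda>x. h1 x + h2 x) = I k h1 + I k h2"
  unfolding I_def by (simp add: distrib_left nn_integral_add)

lemma I_cong: "(\<And>x. \<bar>x\<bar> \<le> b \<Longrightarrow> h1 x = h2 x) \<Longrightarrow> I k h1 = I k h2"
  unfolding I_def
proof (intro nn_integral_cong)
  fix \<omega>
  assume h: "\<And>x. \<bar>x\<bar> \<le> b \<Longrightarrow> h1 x = h2 x"
  show "ennreal (Nind k \<omega>) * h1 (S k \<omega>) = ennreal (Nind k \<omega>) * h2 (S k \<omega>)"
  proof (cases "Nind k \<omega> = 0")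
    case False
    then show ?thesis using h[OF Nind_bound[OF False]] by simp
  qed simp
qed

lemma cond_I:
  fixes g :: "real \<Rightarrow> real \<Rightarrow> real"
  assumes gm[measurable]: "case_prod g \<in> borel_measurable (borel \<Otimes>\<^sub>M borel)" and g0: "\<And>s z. 0 \<le> g s z"
  shows "I k (\<lambda>s. \<integral>\<^sup>+z. ennreal (g s z * nd z) \<partial>lborel) = (\<integral>\<^sup>+\<omega>. ennreal (Nind k \<omega> * g (S k \<omega>) (Z k \<omega>)) \<partial>M)"
  unfolding I_def by (rule cond[OF gm g0, symmetric])

lemma I_up: "I k up = (\<integral>\<^sup>+\<omega>. ennreal (Nind k \<omega> * indicator {b<..} (S (Suc k) \<omega>)) \<partial>M)"
  unfolding up_def[abs_def] S_Suc by (rule cond_I[where g="\<lambda>s z. indicator {b<..} (s + z)"]) auto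
lemma I_dn: "I k dn = (\<integral>\<^sup>+\<omega>. ennreal (Nind k \<omega> * indicator {..< -b} (S (Suc k) \<omega>)) \<partial>M)"
  unfolding dn_def[abs_def] S_Suc by (rule cond_I[where g="\<lambda>s z. indicator {..< -b} (s + z)"]) auto
lemma I_st: "I k st = I (Suc k) (\<lambda>_. 1)"
proof -
  have "I k st = (\<integral>\<^sup>+\<omega>. ennreal (Nind k \<omega> * indicator {-b..b} (S (Suc k) \<omega>)) \<partial>M)"
    unfolding st_def[abs_def] S_Suc by (rule cond_I[where g="\<lambda>s z. indicator {-b..b} (s + z)"]) auto
  then show ?thesis unfolding I_def Nind_Suc by simp
qed
lemma I_upM: "I k upM = (\<integral>\<^sup>+\<omega>. ennreal (Nind k \<omega> * (indicator {b<..} (S (Suc k) \<omega>) * exp (- (2*mu) * S (Suc k) \<omega>))) \<partial>M)"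
  unfolding upM_def[abs_def] S_Suc by (rule cond_I[where g="\<lambda>s z. indicator {b<..} (s + z) * exp (- (2*mu) * (s + z))"]) auto
lemma I_dnM: "I k dnM = (\<integral>\<^sup>+\<omega>. ennreal (Nind k \<omega> * (indicator {..< -b} (S (Suc k) \<omega>) * exp (- (2*mu) * S (Suc k) \<omega>))) \<partial>M)"
  unfolding dnM_def[abs_def] S_Suc by (rule cond_I[where g="\<lambda>s z. indicator {..< -b} (s + z) * exp (- (2*mu) * (s + z))"]) auto
lemma I_stM: "I k stM = I (Suc k) (\<lambda>x. ennreal (exp (- (2*mu) * x)))"
proof -
  have "I k stM = (\<integral>\<^sup>+\<omega>. ennreal (Nind k \<omega> * (indicator {-b..b} (S (Suc k) \<omega>) * exp (- (2*mu) * S (Suc k) \<omega>))) \<partial>M)"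
    unfolding stM_def[abs_def] S_Suc by (rule cond_I[where g="\<lambda>s z. indicator {-b..b} (s + z) * exp (- (2*mu) * (s + z))"]) auto
  also have "\<dots> = I (Suc k) (\<lambda>x. ennreal (exp (- (2*mu) * x)))"
    unfolding I_def Nind_Suc
    by (intro nn_integral_cong) (simp add: ennreal_mult[symmetric] Nind_nonneg mult.assoc)
  finally show ?thesis .
qed

end


lemma enn_le_real: "X \<le> ennreal c * Y \<Longrightarrow> Y \<le> ennreal C \<Longrightarrow> c \<ge> 0 \<Longrightarrow> enn2real X \<le> c * enn2real Y"
proof -
  assume h: "X \<le> ennreal c * Y" "Y \<le> ennreal C" "c \<ge> 0"
  have "Y < \<top>" using h(2) by (simp add: le_less_trans)
  then have "ennreal c * Y < \<top>" by (simp add: ennreal_mult_less_top)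
  then have "enn2real X \<le> enn2real (ennreal c * Y)" using h(1) by (rule enn2real_mono[rotated])
  then show ?thesis using h(3) by (simp add: enn2real_mult)
qed

lemma enn_ge_real: "ennreal c * Y \<le> X \<Longrightarrow> X \<le> ennreal C \<Longrightarrow> c \<ge> 0 \<Longrightarrow> c * enn2real Y \<le> enn2real X"
proof -
  assume h: "ennreal c * Y \<le> X" "X \<le> ennreal C" "c \<ge> 0"
  have "X < \<top>" using h(2) by (simp add: le_less_trans)
  then have "enn2real (ennreal c * Y) \<le> enn2real X" using h(1) by (rule enn2real_mono[rotated])
  then show ?thesis using h(3) by (simp add: enn2real_mult)
qed

lemma enn_fin: "X \<le> ennreal C \<Longrightarrow> X = ennreal (enn2real X)"
  by (metis ennreal_enn2real_if ennreal_less_top le_less_trans top.not_eq_extremum)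

lemma enn_less_real: "X < ennreal c * Y \<Longrightarrow> Y \<le> ennreal C \<Longrightarrow> c \<ge> 0 \<Longrightarrow> enn2real X < c * enn2real Y"
proof -
  assume h: "X < ennreal c * Y" "Y \<le> ennreal C" "c \<ge> 0"
  have Y: "Y = ennreal (enn2real Y)" by (rule enn_fin[OF h(2)])
  have "X \<le> ennreal (c * enn2real Y)" using h(1) Y h(3)
    by (metis ennreal_mult less_imp_le enn2real_nonneg)
  then have X: "X = ennreal (enn2real X)" by (rule enn_fin)
  have "ennreal (enn2real X) < ennreal (c * enn2real Y)" using h(1) Y X h(3)
    by (metis ennreal_mult enn2real_nonneg)
  then show ?thesis by (subst (asm) ennreal_less_iff) auto
qed

lemma enn_gt_real: "ennreal c * Y < X \<Longrightarrow> X \<le> ennreal C \<Longrightarrow> Y \<le> ennreal C' \<Longrightarrow> c \<ge> 0 \<Longrightarrow> c * enn2real Y < enn2real X"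
proof -
  assume h: "ennreal c * Y < X" "X \<le> ennreal C" "Y \<le> ennreal C'" "c \<ge> 0"
  have X: "X = ennreal (enn2real X)" by (rule enn_fin[OF h(2)])
  have Y: "Y = ennreal (enn2real Y)" by (rule enn_fin[OF h(3)])
  have "ennreal c * Y = ennreal (c * enn2real Y)"
    using h(4) by (subst Y) (simp add: ennreal_mult)
  then have "ennreal (c * enn2real Y) < ennreal (enn2real X)" using h(1) X by simp
  then show ?thesis by (subst (asm) ennreal_less_iff) (auto simp: h(4))
qed

lemma sum3: "X \<le> ennreal A \<Longrightarrow> Y \<le> ennreal B \<Longrightarrow> W \<le> ennreal C \<Longrightarrow> ennreal (enn2real X + enn2real Y + enn2real W) = X + Y + W"
proof -
  assume h: "X \<le> ennreal A" "Y \<le> ennreal B" "W \<le> ennreal C"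
  have "X < top" "Y < top" "W < top" using h by (auto intro: le_less_trans)
  then show ?thesis by simp
qed

context gw begin

lemma up_le1: "up x \<le> 1" using sum_up[of x] by (metis add.assoc le_iff_add)
lemma dn_le1: "dn x \<le> 1" using sum_up[of x] by (metis add.commute add.left_commute le_iff_add)
lemma st_le1: "st x \<le> 1" using sum_up[of x] by (metis add.commute le_iff_add)

lemma expb: "-b \<le> x \<Longrightarrow> exp (- (2*mu) * x) \<le> exp ((2*mu) * b)"
proof -
  assume "-b \<le> x"
  then have "mu * (-x) \<le> mu * b" using mu_pos by (intro mult_left_mono) auto
  then show ?thesis by (simp add: algebra_simps)
qed

lemma upM_leE: "-b \<le> x \<Longrightarrow> upM x \<le> ennreal (exp ((2*mu) * b))"
  using sum_upM[of x] expb[of x] by (metis add.assoc le_iff_add ennreal_leI order_trans)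
lemma dnM_leE: "-b \<le> x \<Longrightarrow> dnM x \<le> ennreal (exp ((2*mu) * b))"
  using sum_upM[of x] expb[of x] by (metis add.commute add.left_commute le_iff_add ennreal_leI order_trans)
lemma stM_leE: "-b \<le> x \<Longrightarrow> stM x \<le> ennreal (exp ((2*mu) * b))"
  using sum_upM[of x] expb[of x] by (metis add.commute le_iff_add ennreal_leI order_trans)

lemma st_le_eta: assumes "-b \<le> x" shows "st x \<le> ennreal (1 - eta)"
proof -
  have "st x + ennreal eta \<le> st x + up x" using up_ge_eta[OF assms] by (simp add: add_left_mono)
  also have "\<dots> \<le> 1" using sum_up[of x] by (metis add.commute add.left_commute le_iff_add)
  finally have h: "st x + ennreal eta \<le> 1" .
  have st: "st x = ennreal (enn2real (st x))" using st_le1[of x] by (intro enn_fin[where C=1]) simp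
  have "ennreal (enn2real (st x) + eta) \<le> 1" using h st eta_pos
    by (metis ennreal_plus enn2real_nonneg less_imp_le)
  then have "enn2real (st x) + eta \<le> 1" by (simp add: ennreal_le_1)
  then show ?thesis using st by (metis add.commute ennreal_leI le_diff_eq)
qed

end

context walk begin

lemma I_mono2: assumes h: "\<And>x. \<bar>x\<bar> \<le> b \<Longrightarrow> h1 x \<le> h2 x" shows "I k h1 \<le> I k h2"
  unfolding I_def
proof (intro nn_integral_mono)
  fix \<omega>
  show "ennreal (Nind k \<omega>) * h1 (S k \<omega>) \<le> ennreal (Nind k \<omega>) * h2 (S k \<omega>)"
  proof (cases "Nind k \<omega> = 0")
    case False
    then show ?thesis using h[OF Nind_bound[OF False]] by (simp add: mult_left_mono)
  qed simp
qed

lemma I_cmult: assumes [measurable]: "h \<in> borel_measurable borel"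
  shows "I k (\<lambda>x. ennreal c * h x) = ennreal c * I k h"
proof -
  have "I k (\<lambda>x. ennreal c * h x) = (\<integral>\<^sup>+\<omega>. ennreal c * (ennreal (Nind k \<omega>) * h (S k \<omega>)) \<partial>M)"
    unfolding I_def by (simp add: mult_ac)
  also have "\<dots> = ennreal c * I k h" unfolding I_def by (rule nn_integral_cmult) measurable
  finally show ?thesis .
qed

abbreviation "E \<equiv> exp ((2*mu) * b)"
abbreviation "e \<equiv> exp (- (2*mu) * b)"

definition "pe k = enn2real (I k up)"
definition "pd k = enn2real (I k dn)"
definition "pn k = enn2real (I k (\<lambda>_. 1))"
definition "ae k = enn2real (I k upM)"
definition "ad k = enn2real (I k dnM)"
definition "w k = enn2real (I k (\<lambda>x. ennreal (exp (- (2*mu) * x))))"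

lemma Iup_b: "I k up \<le> ennreal 1" by (rule I_bound) (simp add: up_le1)
lemma Idn_b: "I k dn \<le> ennreal 1" by (rule I_bound) (simp add: dn_le1)
lemma Ist_b: "I k st \<le> ennreal 1" by (rule I_bound) (simp add: st_le1)
lemma I1_b: "I k (\<lambda>_. 1) \<le> ennreal 1" by (rule I_bound) simp
lemma IupM_b: "I k upM \<le> ennreal E" by (rule I_bound) (simp add: upM_leE)
lemma IdnM_b: "I k dnM \<le> ennreal E" by (rule I_bound) (simp add: dnM_leE)
lemma IstM_b: "I k stM \<le> ennreal E" by (rule I_bound) (simp add: stM_leE)
lemma Iexp_b: "I k (\<lambda>x. ennreal (exp (- (2*mu) * x))) \<le> ennreal E" by (rule I_bound) (rule ennreal_leI, rule expb, simp add: abs_le_iff)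

lemma rel1: "pe k + pd k + pn (Suc k) = pn k"
proof -
  have "I k up + I k dn + I k st = I k (\<lambda>x. up x + dn x + st x)"
    by (simp add: I_add)
  also have "\<dots> = I k (\<lambda>_. 1)" by (simp add: sum_up)
  finally have h: "I k up + I k dn + I k st = I k (\<lambda>_. 1)" .
  have "ennreal (pe k + pd k + pn (Suc k)) = I k up + I k dn + I k st"
    unfolding pe_def pd_def pn_def I_st[symmetric]
    by (rule sum3[OF Iup_b Idn_b Ist_b])
  also have "\<dots> = ennreal (pn k)" unfolding h pn_def by (rule enn_fin[OF I1_b])
  finally have eq: "ennreal (pe k + pd k + pn (Suc k)) = ennreal (pn k)" .
  have nn: "0 \<le> pe k + pd k + pn (Suc k)" "0 \<le> pn k" by (simp_all add: pe_def pd_def pn_def)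
  show ?thesis using ennreal_inj[OF nn] eq by blast
qed

lemma rel2: "ae k + ad k + w (Suc k) = w k"
proof -
  have "I k upM + I k dnM + I k stM = I k (\<lambda>x. upM x + dnM x + stM x)"
    by (simp add: I_add)
  also have "\<dots> = I k (\<lambda>x. ennreal (exp (- (2*mu) * x)))" by (simp add: sum_upM)
  finally have h: "I k upM + I k dnM + I k stM = I k (\<lambda>x. ennreal (exp (- (2*mu) * x)))" .
  have "ennreal (ae k + ad k + w (Suc k)) = I k upM + I k dnM + I k stM"
    unfolding ae_def ad_def w_def I_stM[symmetric]
    by (rule sum3[OF IupM_b IdnM_b IstM_b])
  also have "\<dots> = ennreal (w k)" unfolding h w_def by (rule enn_fin[OF Iexp_b])
  finally have eq: "ennreal (ae k + ad k + w (Suc k)) = ennreal (w k)" .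
  have nn: "0 \<le> ae k + ad k + w (Suc k)" "0 \<le> w k" by (simp_all add: ae_def ad_def w_def)
  show ?thesis using ennreal_inj[OF nn] eq by blast
qed

end


context walk begin

lemma r1_nonneg: "r1 \<ge> 0" unfolding r1_def by (simp add: f_nonneg)
lemma r2_nonneg: "r2 \<ge> 0" unfolding r2_def by (simp add: f_nonneg)

lemma b1: "r1 * e * pe k \<le> ae k"
proof -
  have "ennreal (r1 * e) * I k up = I k (\<lambda>x. ennreal (r1 * e) * up x)" by (simp add: I_cmult)
  also have "\<dots> \<le> I k upM" by (rule I_mono2) (rule upM_ge, simp add: abs_le_iff)
  finally show ?thesis unfolding pe_def ae_def by (rule enn_ge_real[OF _ IupM_b]) (simp add: r1_nonneg)
qed

lemma b2: "ae k \<le> e * pe k"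
proof -
  have "I k upM \<le> ennreal e * I k up" by (rule I_mono[OF upM_le]) simp
  then show ?thesis unfolding pe_def ae_def by (rule enn_le_real[OF _ Iup_b]) simp
qed

lemma b3: "E * pd k \<le> ad k"
proof -
  have "ennreal E * I k dn = I k (\<lambda>x. ennreal E * dn x)" by (simp add: I_cmult)
  also have "\<dots> \<le> I k dnM" by (rule I_mono2) (simp add: dnM_ge)
  finally show ?thesis unfolding pd_def ad_def by (rule enn_ge_real[OF _ IdnM_b]) simp
qed

lemma b4: "ad k \<le> r2 * E * pd k"
proof -
  have "I k dnM \<le> ennreal (r2 * E) * I k dn" by (rule I_mono) (simp_all add: dnM_le abs_le_iff)
  then show ?thesis unfolding pd_def ad_def by (rule enn_le_real[OF _ Idn_b]) (simp add: r2_nonneg)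
qed

lemma eta_le1: "eta \<le> 1"
proof -
  have "ennreal eta \<le> 1" by (rule order_trans[OF up_ge_eta[of 0] up_le1]) (use b_pos in simp)
  then show ?thesis by (simp add: ennreal_le_1)
qed

lemma b5: "pn (Suc k) \<le> (1 - eta) * pn k"
proof -
  have "I k st \<le> ennreal (1 - eta) * I k (\<lambda>_. 1)" by (rule I_mono) (simp_all add: st_le_eta abs_le_iff)
  then show ?thesis unfolding pn_def I_st[symmetric] by (rule enn_le_real[OF _ I1_b]) (simp add: eta_le1)
qed

lemma b6: "w k \<le> E * pn k"
proof -
  have h: "ennreal (exp (- (2*mu) * x)) \<le> ennreal E * 1" if "\<bar>x\<bar> \<le> b" for x
    using expb[of x] that by (simp add: abs_le_iff)
  have "I k (\<lambda>x. ennreal (exp (- (2*mu) * x))) \<le> ennreal E * I k (\<lambda>_. 1)"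
    by (rule I_mono[OF h]) simp_all
  then show ?thesis unfolding pn_def w_def by (rule enn_le_real[OF _ I1_b]) simp
qed

lemma s1: "ae 0 < e * pe 0"
  unfolding ae_def pe_def I_0 using upM_strict by (rule enn_less_real[OF _ up_le1[unfolded ennreal_1[symmetric]]]) simp

lemma s2: "E * pd 0 < ad 0"
  unfolding ad_def pd_def I_0 using dnM_strict
  by (rule enn_gt_real[OF _ dnM_leE dn_le1[unfolded ennreal_1[symmetric]]]) (use b_pos in simp_all)

lemma pn0: "pn 0 = 1" unfolding pn_def I_0 by simp
lemma w0: "w 0 = 1" unfolding w_def I_0 by simp

lemma nonnegs: "pe k \<ge> 0" "pd k \<ge> 0" "pn k \<ge> 0" "ae k \<ge> 0" "ad k \<ge> 0" "w k \<ge> 0"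
  unfolding pe_def pd_def pn_def ae_def ad_def w_def by simp_all

end


context walk begin

lemma part1: "(\<Sum>k<n. pe k + pd k) = 1 - pn n"
proof (induction n)
  case 0 then show ?case by (simp add: pn0)
next
  case (Suc n) then show ?case using rel1[of n] by simp
qed

lemma part2: "(\<Sum>k<n. ae k + ad k) = 1 - w n"
proof (induction n)
  case 0 then show ?case by (simp add: w0)
next
  case (Suc n) then show ?case using rel2[of n] by simp
qed

lemma pn_geom: "pn n \<le> (1 - eta) ^ n"
proof (induction n)
  case 0 then show ?case by (simp add: pn0)
next
  case (Suc n)
  have "pn (Suc n) \<le> (1 - eta) * pn n" by (rule b5)
  also have "\<dots> \<le> (1 - eta) * (1 - eta) ^ n" using Suc eta_le1 by (intro mult_left_mono) auto
  finally show ?case by simp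
qed

lemma pn_lim: "pn \<longlonglongrightarrow> 0"
proof (rule tendsto_sandwich[of "\<lambda>_. 0" _ _ "\<lambda>n. (1 - eta) ^ n"])
  show "\<forall>\<^sub>F n in sequentially. 0 \<le> pn n" by (simp add: nonnegs)
  show "\<forall>\<^sub>F n in sequentially. pn n \<le> (1 - eta) ^ n" by (simp add: pn_geom)
  show "(\<lambda>n. (1 - eta) ^ n) \<longlonglongrightarrow> 0" using eta_pos eta_le1 by (intro LIMSEQ_power_zero) auto
qed simp

lemma w_lim: "w \<longlonglongrightarrow> 0"
proof (rule tendsto_sandwich[of "\<lambda>_. 0" _ _ "\<lambda>n. E * pn n"])
  show "\<forall>\<^sub>F n in sequentially. 0 \<le> w n" by (simp add: nonnegs)
  show "\<forall>\<^sub>F n in sequentially. w n \<le> E * pn n" by (simp add: b6)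
  show "(\<lambda>n. E * pn n) \<longlonglongrightarrow> 0" using tendsto_mult_right_zero[OF pn_lim] by simp
qed simp

lemma sums1: "(\<lambda>k. pe k + pd k) sums 1"
  unfolding sums_def part1 using tendsto_diff[OF tendsto_const[of 1] pn_lim] by simp

lemma sums2: "(\<lambda>k. ae k + ad k) sums 1"
  unfolding sums_def part2 using tendsto_diff[OF tendsto_const[of 1] w_lim] by simp

lemma summ: "summable pe" "summable pd" "summable ae" "summable ad"
proof -
  have s1: "summable (\<lambda>k. pe k + pd k)" using sums1 by (rule sums_summable)
  have s2: "summable (\<lambda>k. ae k + ad k)" using sums2 by (rule sums_summable)
  show "summable pe" by (rule summable_comparison_test[OF _ s1]) (auto simp: nonnegs)
  show "summable pd" by (rule summable_comparison_test[OF _ s1]) (auto simp: nonnegs)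
  show "summable ae" by (rule summable_comparison_test[OF _ s2]) (auto simp: nonnegs)
  show "summable ad" by (rule summable_comparison_test[OF _ s2]) (auto simp: nonnegs)
qed

lemma f2_lt_f0: "f (2*mu) < f 0" using F_strict[of 0 "2*mu"] mu_pos by simp

lemma r1_lt1: "r1 < 1" unfolding r1_def using f2_lt_f0 f0_pos by simp
lemma r2_gt1: "r2 > 1" unfolding r2_def using f2_lt_f0 f2_pos by simp

lemma E_gt1: "E > 1" using mu_pos b_pos by simp
lemma e_lt1: "e < 1" using mu_pos b_pos by simp
lemma e_pos: "e > 0" by simp

lemma main_bounds:
  "(E - 1) / (E - r1 * e) < suminf pe \<and> suminf pe < (E * r2 - 1) / (E * r2 - e)"
proof -
  define p where "p = suminf pe"
  define q where "q = suminf pd"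
  define A where "A = suminf ae"
  define B where "B = suminf ad"
  have pq: "p + q = 1" unfolding p_def q_def using sums_unique[OF sums1] suminf_add[OF summ(1,2)] by simp
  have AB: "A + B = 1" unfolding A_def B_def using sums_unique[OF sums2] suminf_add[OF summ(3,4)] by simp
  have Ap: "r1 * e * p \<le> A"
  proof -
    have "(\<Sum>k. r1 * e * pe k) \<le> A" unfolding A_def
      by (rule suminf_le[OF b1 summable_mult[OF summ(1)] summ(3)])
    then show ?thesis unfolding p_def using suminf_mult[OF summ(1), of "r1 * e"] by simp
  qed
  have Bq: "E * q < B"
  proof -
    have "0 < (\<Sum>k. ad k - E * pd k)"
      by (rule suminf_pos2[where i=0]) (auto intro: summable_diff[OF summ(4) summable_mult[OF summ(2)]] simp: b3 s2)
    also have "(\<Sum>k. ad k - E * pd k) = B - E * q"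
      unfolding B_def q_def using suminf_diff[OF summ(4) summable_mult[OF summ(2)], of E] suminf_mult[OF summ(2), of E] by simp
    finally show ?thesis by simp
  qed
  have Ap2: "A < e * p"
  proof -
    have "0 < (\<Sum>k. e * pe k - ae k)"
    proof (rule suminf_pos2[where i=0])
      show "summable (\<lambda>k. e * pe k - ae k)" by (rule summable_diff[OF summable_mult[OF summ(1)] summ(3)])
      show "0 \<le> e * pe n - ae n" for n using b2[of n] by simp
      show "0 < e * pe 0 - ae 0" using s1 by simp
    qed
    also have "(\<Sum>k. e * pe k - ae k) = e * p - A"
      unfolding A_def p_def using suminf_diff[OF summable_mult[OF summ(1)] summ(3), of e] suminf_mult[OF summ(1), of e] by simp
    finally show ?thesis by simp
  qed
  have Bq2: "B \<le> r2 * E * q"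
  proof -
    have "B \<le> (\<Sum>k. r2 * E * pd k)" unfolding B_def
      by (rule suminf_le[OF b4 summ(4) summable_mult[OF summ(2)]])
    then show ?thesis unfolding q_def using suminf_mult[OF summ(2), of "r2 * E"] by simp
  qed
  have lo: "(E - 1) / (E - r1 * e) < p"
  proof -
    have "r1 * e \<le> r1 * 1" using e_lt1 r1_nonneg by (intro mult_left_mono) auto
    then have den: "E - r1 * e > 0" using r1_lt1 E_gt1 by linarith
    have "r1 * e * p + E * q < 1" using Ap Bq AB by linarith
    moreover have "q = 1 - p" using pq by simp
    ultimately have "1 > r1 * e * p + E * (1 - p)" by simp
    then have "E - 1 < p * (E - r1 * e)" by (simp add: algebra_simps)
    then show ?thesis using den by (simp add: divide_less_eq)
  qed
  have hi: "p < (E * r2 - 1) / (E * r2 - e)"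
  proof -
    have "1 * 1 < E * r2" by (rule mult_strict_mono) (use E_gt1 r2_gt1 in auto)
    then have den: "E * r2 - e > 0" using e_lt1 by linarith
    have "1 < e * p + r2 * E * q" using Ap2 Bq2 AB by linarith
    moreover have "q = 1 - p" using pq by simp
    ultimately have "1 < e * p + r2 * E * (1 - p)" by simp
    then have "p * (E * r2 - e) < E * r2 - 1" by (simp add: algebra_simps)
    then show ?thesis using den by (simp add: less_divide_eq)
  qed
  show ?thesis using lo hi unfolding p_def by simp
qed

end


context walk begin

definition Eset :: "nat \<Rightarrow> 'a set" where
  "Eset k = {\<omega> \<in> space M. Nind k \<omega> = 1 \<and> b < S (Suc k) \<omega>}"

lemma Eset_sets[measurable]: "Eset k \<in> sets M"
  unfolding Eset_def by measurable

lemma Eset_measure: "measure M (Eset k) = pe k"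
proof -
  have "emeasure M (Eset k) = (\<integral>\<^sup>+\<omega>. indicator (Eset k) \<omega> \<partial>M)"
    by (simp add: nn_integral_indicator)
  also have "\<dots> = (\<integral>\<^sup>+\<omega>. ennreal (Nind k \<omega> * indicator {b<..} (S (Suc k) \<omega>)) \<partial>M)"
  proof (intro nn_integral_cong)
    fix \<omega> assume "\<omega> \<in> space M"
    then show "indicator (Eset k) \<omega> = ennreal (Nind k \<omega> * indicator {b<..} (S (Suc k) \<omega>))"
      using Nind_01[of k \<omega>] unfolding Eset_def by (auto split: split_indicator)
  qed
  also have "\<dots> = I k up" by (rule I_up[symmetric])
  finally show ?thesis unfolding pe_def measure_def by simp
qed

lemma Nind_one_iff: "Nind k \<omega> = 1 \<longleftrightarrow> (\<forall>j\<in>{1..k}. \<bar>S j \<omega>\<bar> \<le> b)"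
  unfolding Nind_def by simp

lemma upper_eq: "upper_exit_event M Z b = (\<Union>k. Eset k)"
proof (intro set_eqI iffI)
  fix \<omega> assume h: "\<omega> \<in> upper_exit_event M Z b"
  define P where "P = (\<lambda>m. m \<ge> 1 \<and> (S m \<omega> < -b \<or> S m \<omega> > b))"
  have ex: "\<exists>m. P m" using h unfolding upper_exit_event_def P_def by auto
  define t where "t = (LEAST m. P m)"
  have t_eq: "exit_time Z b \<omega> = t" unfolding t_def P_def exit_time_def ..
  have Pt: "P t" unfolding t_def using ex by (rule LeastI_ex)
  have notP: "\<not> P j" if "j < t" for j using that unfolding t_def by (rule not_less_Least)
  have t1: "t \<ge> 1" using Pt unfolding P_def by simp
  have St: "S t \<omega> > b" using h t_eq unfolding upper_exit_event_def by simp
  have "Nind (t - 1) \<omega> = 1" unfolding Nind_one_iff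
  proof
    fix j assume "j \<in> {1..t-1}"
    then have "j < t" "j \<ge> 1" by auto
    then show "\<bar>S j \<omega>\<bar> \<le> b" using notP[of j] unfolding P_def by auto
  qed
  moreover have "Suc (t - 1) = t" using t1 by simp
  ultimately have "\<omega> \<in> Eset (t - 1)" using h St unfolding Eset_def upper_exit_event_def by auto
  then show "\<omega> \<in> (\<Union>k. Eset k)" by auto
next
  fix \<omega> assume "\<omega> \<in> (\<Union>k. Eset k)"
  then obtain k where k: "\<omega> \<in> Eset k" by auto
  then have sp: "\<omega> \<in> space M" and N: "\<forall>j\<in>{1..k}. \<bar>S j \<omega>\<bar> \<le> b" and Sk: "b < S (Suc k) \<omega>"
    unfolding Eset_def Nind_one_iff by auto
  define P where "P = (\<lambda>m. m \<ge> 1 \<and> (S m \<omega> < -b \<or> S m \<omega> > b))"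
  have "(LEAST m. P m) = Suc k"
  proof (rule Least_equality)
    show "P (Suc k)" unfolding P_def using Sk by simp
    fix m assume Pm: "P m"
    show "Suc k \<le> m"
    proof (rule ccontr)
      assume "\<not> Suc k \<le> m"
      then have "m \<in> {1..k}" using Pm unfolding P_def by auto
      then have "\<bar>S m \<omega>\<bar> \<le> b" using N by blast
      with Pm show False unfolding P_def by auto
    qed
  qed
  then have "exit_time Z b \<omega> = Suc k" unfolding exit_time_def P_def .
  then show "\<omega> \<in> upper_exit_event M Z b" unfolding upper_exit_event_def using sp Sk by auto
qed

lemma Eset_disj: "disjoint_family Eset"
proof (unfold disjoint_family_on_def, intro ballI impI)
  have *: "Eset k \<inter> Eset k' = {}" if "k < k'" for k k'
  proof -
    have "\<bar>S (Suc k) \<omega>\<bar> \<le> b" if "\<omega> \<in> Eset k'" for \<omega>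
      using that \<open>k < k'\<close> unfolding Eset_def Nind_one_iff by auto
    then show ?thesis unfolding Eset_def by fastforce
  qed
  fix k k' :: nat assume "k \<noteq> k'"
  then show "Eset k \<inter> Eset k' = {}" using *[of k k'] *[of k' k] by (cases "k < k'") auto
qed

lemma upper_measure: "measure M (upper_exit_event M Z b) = suminf pe"
proof -
  have "(\<lambda>k. measure M (Eset k)) sums measure M (\<Union>k. Eset k)"
    by (rule measure_UNION) (auto simp: Eset_disj emeasure_finite)
  then show ?thesis unfolding upper_eq Eset_measure by (simp add: sums_unique)
qed

end


theorem proposition2:
  fixes M :: "'a measure" and Z :: "nat \<Rightarrow> 'a \<Rightarrow> real" and \<mu> b :: real
  assumes "prob_space M"
    and "\<mu> > 0" and "b > 0"
    and "prob_space.indep_vars M (\<lambda>_. borel) Z UNIV"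
    and "\<And>i. distributed M lborel (Z i) (normal_density \<mu> 1)"
  shows "(exp (2*\<mu>*b) - 1) / (exp (2*\<mu>*b) - R_ratio (-\<mu>) * exp (-2*\<mu>*b))
           < measure M (upper_exit_event M Z b)
       \<and> measure M (upper_exit_event M Z b)
           < (exp (2*\<mu>*b) * R_ratio \<mu> - 1) / (exp (2*\<mu>*b) * R_ratio \<mu> - exp (-2*\<mu>*b))"
proof -
  interpret w: walk \<mu> b M Z
    by (rule walk.intro) (simp_all add: gw_def walk_axioms_def assms)
  have m: "measure M (upper_exit_event M Z b) = suminf w.pe" by (rule w.upper_measure)
  show ?thesis using w.main_bounds unfolding m w.r1_R w.r2_R by simp
qed

end
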